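(* Consider a persuasion instance in the public mode, and fix a representative set $\bar{\mathcal A}$. For every stable public policy $\sigma:\Omega\to\Delta(\mathcal A\times G)$ there exists a stable public policy $\bar\sigma:\Omega\to\Delta(C)$, where $$C=\{(\bar{\mathbf a},\beta):\bar{\mathbf a}\in\bar{\mathcal A},\ \beta\in B^{\mathrm{pub}}_{\rho_{\bar{\mathbf a}}}\},$$ such that $u_0(\bar\sigma)\ge u_0(\sigma)$. Here a meta-signal $c=(\bar{\mathbf a},\beta)\in C$ recommends the joint action $\bar{\mathbf a}$ and carries $\beta$ as its additional (publicly observed) information. Moreover, for every $c\in C$ sent by $\bar\sigma$ with positive probability, the public signature of $c$ (under $\bar\sigma$) is exactly $c$.
   Context: A persuasion instance consists of: a finite set $\Omega$ of worlds; a prior $\mu\in\Delta(\Omega)$; agents $N=\{1,\dots,n\}$; a finite action set $A$; a partition $\mathcal T$ of $N$ into nonempty sets called types; for each $T\in\mathcal T$ a utility $u_T(a,\rho\mid\omega)\in\mathbb R$ defined for $a\in A$, action profiles $\rho$, and $\omega\in\Omega$; a principal utility $u_0(\rho\mid\omega)\in\mathbb R$; and an integer $d\ge 1$ (maximum coalition size). Joint actions are $\mathbf a\in\mathcal A=A^n$; the action profile of $\mathbf a$ is $\rho_{\mathbf a}:\mathcal T\times A\to\mathbb Z_{\ge0}$, $\rho_{\mathbf a}(T,a)=|\{i\in T:a_i=a\}|$. For $i\in T$, $u_i(\mathbf a\mid\omega)=u_T(a_i,\rho_{\mathbf a}\mid\omega)$; for $p\in\Delta(\Omega)$ write $u(\cdot\mid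 p)=\mathbb E_{\omega\sim p}u(\cdot\mid\omega)$. A policy is a map $\sigma:\Omega\to\Delta(\mathcal A\times G)$ (finitely supported distributions), where $G$ is a set of tuples $\mathbf g=(g_i)_{i\in N}$; elements $s=(\mathbf a,\mathbf g)$ are meta-signals. The part $s_i$ of $s$ observed by agent $i$ is $s_i=(\mathbf a,\mathbf g)$ in the public mode, $s_i=(\mathbf a,g_i)$ in the semi-private mode, and $s_i=(a_i,g_i)$ in the private mode. Agent $i$'s posterior upon observing $s_i$ is $\Pr(\tilde{\mathbf a},\omega\mid s_i)=\mu(\omega)\,\sigma(\{s'=(\tilde{\mathbf a},\mathbf g'):s'_i=s_i\}\mid\omega)\big/\sum_{\omega'}\mu(\omega')\,\sigma(\{s':s'_i=s_i\}\mid\omega')$. A meta-signal $s$ is unstable if there exist a nonempty $N'\subseteq N$ with $|N'|\le d$ and actions $(a'_i)_{i\in N'}$ such that for every $i\in N'$: $\sum_{\tilde{\mathbf a},\omega}\Pr(\tilde{\mathbf a},\omega\mid s_i)\,\big(u_i(\tilde{\mathbf a}\oplus\mathbf a'\mid\omega)-u_i(\tilde{\mathbf a}\mid\omega)\big)>0$, where $\tilde{\mathbf a}\oplus\mathbf a'$ replaces $\tilde a_i$ by $a'_i$ for all $i\in N'$; otherwise $s$ is stable. A policy is stable if every meta-signal it sends with positive probability is stable. The principal's utility is $u_0(\sigma)=\sum_\omega\mu(\omega)\sum_{(\mathbf a,\mathbf g)}\sigma((\mathbf a,\mathbf g)\mid\omega)\,u_0(\rho_{\mathbf a}\mid\omega)$.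 A representative set $\bar{\mathcal A}\subseteq\mathcal A$ contains, for each action profile $\rho$ realizable by some joint action, exactly one $\bar{\mathbf a}$ with $\rho_{\bar{\mathbf a}}=\rho$; $\bar{\mathbf a}$ is the representative of every $\mathbf a$ with $\rho_{\mathbf a}=\rho$. Deviations: $D_*$ is the set of functions $\delta:\mathcal T\times A\times A\to\mathbb Z_{\ge0}$ with $1\le\sum_{T,a,a'}\delta(T,a,a')\le d$ and $\delta(T,a,a)=0$ for all $T,a$; for a profile $\rho$, $D_\rho=\{\delta\in D_*:\sum_{a'}\delta(T,a,a')\le\rho(T,a)\ \forall T,a\}$; and $(\rho\oplus\delta)(T,a)=\rho(T,a)-\sum_{a'}\delta(T,a,a')+\sum_{a''}\delta(T,a'',a)$. The public blocking profile of a meta-signal $s=(\mathbf a,\mathbf g)$ with posterior $p_s=\Pr(\cdot\mid s)\in\Delta(\Omega)$ is $\beta=\{(\delta,T,a,a')\in D_{\rho_{\mathbf a}}\times\mathcal T\times A^2:\delta(T,a,a')>0,\ u_T(a,\rho_{\mathbf a}\mid p_s)\ge u_T(a',\rho_{\mathbf a}\oplus\delta\mid p_s)\}$. $B^{\mathrm{pub}}_\rho$ is the set of all subsets $\beta\subseteq D_\rho\times\mathcal T\times A^2$ such that every $(\delta,T,a,a')\in\beta$ has $\delta(T,a,a')>0$ and, for every $\delta\in D_\rho$, some element of $\beta$ has first coordinate $\delta$. The public signature of $s=(\mathbf a,\mathbf g)$ is $(\bar{\mathbf a},\beta)$ where $\bar{\mathbf a}$ is the representative of $\mathbf a$ and $\beta$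 is the public blocking profile of $s$. *)

theory Defs
  imports "HOL-Probability.Probability_Mass_Function"
begin

(* Agents are 0,...,n-1; a joint action is a list of length n (entry i = action of agent i).
   Types are sets of agents (elements of the partition Ts).  Worlds form a finite type 'w,
   actions a finite type 'a (so Omega = UNIV, A = UNIV). *)

type_synonym 'a prof = "nat set \<Rightarrow> 'a \<Rightarrow> nat"
type_synonym 'a dev = "nat set \<Rightarrow> 'a \<Rightarrow> 'a \<Rightarrow> nat"

definition joint :: "nat \<Rightarrow> 'a list set" where
  "joint n = {xs. length xs = n}"

definition is_partition :: "nat \<Rightarrow> nat set set \<Rightarrow> bool" where
  "is_partition n Ts \<longleftrightarrow> (\<forall>T\<in>Ts. T \<noteq> {}) \<and> \<Union>Ts = {..<n}
     \<and> (\<forall>T\<in>Ts. \<forall>T'\<in>Ts. T \<noteq> T' \<longrightarrow> T \<inter> T' = {})"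

definition typ_of :: "nat set set \<Rightarrow> nat \<Rightarrow> nat set" where
  "typ_of Ts i = (THE T. T \<in> Ts \<and> i \<in> T)"

definition profile :: "nat set set \<Rightarrow> 'a list \<Rightarrow> 'a prof" where
  "profile Ts xs = (\<lambda>T a. if T \<in> Ts then card {i \<in> T. i < length xs \<and> xs ! i = a} else 0)"

definition agent_util :: "nat set set \<Rightarrow> (nat set \<Rightarrow> 'a \<Rightarrow> 'a prof \<Rightarrow> 'w \<Rightarrow> real)
    \<Rightarrow> 'a list \<Rightarrow> nat \<Rightarrow> 'w \<Rightarrow> real" where
  "agent_util Ts u xs i \<omega> = u (typ_of Ts i) (xs ! i) (profile Ts xs) \<omega>"

text \<open>A policy: finitely supported distribution over meta-signals (joint action, extra info).\<close>
definition is_policy :: "nat \<Rightarrow> ('w \<Rightarrow> ('a list \<times> 'g) pmf) \<Rightarrow> bool" where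
  "is_policy n \<sigma> \<longleftrightarrow> (\<forall>\<omega>. finite (set_pmf (\<sigma> \<omega>)) \<and> fst ` set_pmf (\<sigma> \<omega>) \<subseteq> joint n)"

definition sig_prob :: "'w::finite pmf \<Rightarrow> ('w \<Rightarrow> 's pmf) \<Rightarrow> 's \<Rightarrow> real" where
  "sig_prob \<mu> \<sigma> s = (\<Sum>\<omega>\<in>UNIV. pmf \<mu> \<omega> * pmf (\<sigma> \<omega>) s)"

text \<open>Posterior Pr(a~, omega | s_i) in the public mode (s_i = s).\<close>
definition post_pub :: "'w::finite pmf \<Rightarrow> ('w \<Rightarrow> ('a list \<times> 'g) pmf) \<Rightarrow> ('a list \<times> 'g)
    \<Rightarrow> 'a list \<Rightarrow> 'w \<Rightarrow> real" where
  "post_pub \<mu> \<sigma> s xt \<omega> =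
     pmf \<mu> \<omega> * measure_pmf.prob (\<sigma> \<omega>) {s'. fst s' = xt \<and> s' = s} / sig_prob \<mu> \<sigma> s"

definition post_world :: "'w::finite pmf \<Rightarrow> ('w \<Rightarrow> 's pmf) \<Rightarrow> 's \<Rightarrow> 'w \<Rightarrow> real" where
  "post_world \<mu> \<sigma> s \<omega> = pmf \<mu> \<omega> * pmf (\<sigma> \<omega>) s / sig_prob \<mu> \<sigma> s"

definition upd :: "'a list \<Rightarrow> nat set \<Rightarrow> (nat \<Rightarrow> 'a) \<Rightarrow> 'a list" where
  "upd xs N' a' = map (\<lambda>i. if i \<in> N' then a' i else xs ! i) [0..<length xs]"

definition unstable_pub :: "nat \<Rightarrow> nat set set \<Rightarrow> (nat set \<Rightarrow> 'a \<Rightarrow> 'a prof \<Rightarrow> 'w \<Rightarrow> real)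
    \<Rightarrow> 'w::finite pmf \<Rightarrow> nat \<Rightarrow> ('w \<Rightarrow> ('a list \<times> 'g) pmf) \<Rightarrow> ('a list \<times> 'g) \<Rightarrow> bool" where
  "unstable_pub n Ts u \<mu> d \<sigma> s \<longleftrightarrow>
     (\<exists>N' a'. N' \<noteq> {} \<and> N' \<subseteq> {..<n} \<and> card N' \<le> d \<and>
        (\<forall>i\<in>N'. (\<Sum>xt\<in>joint n. \<Sum>\<omega>\<in>UNIV. post_pub \<mu> \<sigma> s xt \<omega> *
              (agent_util Ts u (upd xt N' a') i \<omega> - agent_util Ts u xt i \<omega>)) > 0))"

definition stable_pub_policy :: "nat \<Rightarrow> nat set set \<Rightarrow> (nat set \<Rightarrow> 'a \<Rightarrow> 'a prof \<Rightarrow> 'w \<Rightarrow> real)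
    \<Rightarrow> 'w::finite pmf \<Rightarrow> nat \<Rightarrow> ('w \<Rightarrow> ('a list \<times> 'g) pmf) \<Rightarrow> bool" where
  "stable_pub_policy n Ts u \<mu> d \<sigma> \<longleftrightarrow> is_policy n \<sigma> \<and>
     (\<forall>s. sig_prob \<mu> \<sigma> s > 0 \<longrightarrow> \<not> unstable_pub n Ts u \<mu> d \<sigma> s)"

definition principal_util :: "nat set set \<Rightarrow> ('a prof \<Rightarrow> 'w \<Rightarrow> real) \<Rightarrow> 'w::finite pmf
    \<Rightarrow> ('w \<Rightarrow> ('a list \<times> 'g) pmf) \<Rightarrow> real" where
  "principal_util Ts u0 \<mu> \<sigma> =
     (\<Sum>\<omega>\<in>UNIV. pmf \<mu> \<omega> * (\<Sum>s\<in>set_pmf (\<sigma> \<omega>). pmf (\<sigma> \<omega>) s * u0 (profile Ts (fst s)) \<omega>))"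

definition is_rep_set :: "nat \<Rightarrow> nat set set \<Rightarrow> 'a list set \<Rightarrow> bool" where
  "is_rep_set n Ts Abar \<longleftrightarrow> Abar \<subseteq> joint n \<and>
     (\<forall>xs\<in>joint n. \<exists>!ab. ab \<in> Abar \<and> profile Ts ab = profile Ts xs)"

definition rep_of :: "nat set set \<Rightarrow> 'a list set \<Rightarrow> 'a list \<Rightarrow> 'a list" where
  "rep_of Ts Abar xs = (THE ab. ab \<in> Abar \<and> profile Ts ab = profile Ts xs)"

definition dev_size :: "nat set set \<Rightarrow> 'a::finite dev \<Rightarrow> nat" where
  "dev_size Ts \<delta> = (\<Sum>T\<in>Ts. \<Sum>a\<in>UNIV. \<Sum>a'\<in>UNIV. \<delta> T a a')"

definition D_star :: "nat set set \<Rightarrow> nat \<Rightarrow> 'a::finite dev set" where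
  "D_star Ts d = {\<delta>. (\<forall>T a a'. T \<notin> Ts \<longrightarrow> \<delta> T a a' = 0) \<and> (\<forall>T a. \<delta> T a a = 0)
      \<and> 1 \<le> dev_size Ts \<delta> \<and> dev_size Ts \<delta> \<le> d}"

definition D_rho :: "nat set set \<Rightarrow> nat \<Rightarrow> 'a::finite prof \<Rightarrow> 'a dev set" where
  "D_rho Ts d \<rho> = {\<delta> \<in> D_star Ts d. \<forall>T\<in>Ts. \<forall>a. (\<Sum>a'\<in>UNIV. \<delta> T a a') \<le> \<rho> T a}"

definition prof_plus :: "'a::finite prof \<Rightarrow> 'a dev \<Rightarrow> 'a prof" where
  "prof_plus \<rho> \<delta> = (\<lambda>T a. \<rho> T a + (\<Sum>a''\<in>UNIV. \<delta> T a'' a) - (\<Sum>a'\<in>UNIV. \<delta> T a a'))"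

definition type_util :: "(nat set \<Rightarrow> 'a \<Rightarrow> 'a prof \<Rightarrow> 'w \<Rightarrow> real) \<Rightarrow> nat set \<Rightarrow> 'a \<Rightarrow> 'a prof
    \<Rightarrow> ('w::finite \<Rightarrow> real) \<Rightarrow> real" where
  "type_util u T a \<rho> p = (\<Sum>\<omega>\<in>UNIV. p \<omega> * u T a \<rho> \<omega>)"

definition blocking_pub :: "nat set set \<Rightarrow> (nat set \<Rightarrow> 'a::finite \<Rightarrow> 'a prof \<Rightarrow> 'w \<Rightarrow> real)
    \<Rightarrow> 'w::finite pmf \<Rightarrow> nat \<Rightarrow> ('w \<Rightarrow> ('a list \<times> 'g) pmf) \<Rightarrow> ('a list \<times> 'g)
    \<Rightarrow> ('a dev \<times> nat set \<times> 'a \<times> 'a) set" where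
  "blocking_pub Ts u \<mu> d \<sigma> s =
     (let \<rho> = profile Ts (fst s); p = post_world \<mu> \<sigma> s in
      {(\<delta>, T, a, a'). \<delta> \<in> D_rho Ts d \<rho> \<and> T \<in> Ts \<and> \<delta> T a a' > 0 \<and>
         type_util u T a \<rho> p \<ge> type_util u T a' (prof_plus \<rho> \<delta>) p})"

definition B_pub :: "nat set set \<Rightarrow> nat \<Rightarrow> 'a::finite prof \<Rightarrow> ('a dev \<times> nat set \<times> 'a \<times> 'a) set set" where
  "B_pub Ts d \<rho> = {\<beta>. \<beta> \<subseteq> D_rho Ts d \<rho> \<times> Ts \<times> UNIV \<times> UNIV \<and>
      (\<forall>(\<delta>, T, a, a')\<in>\<beta>. \<delta> T a a' > 0) \<and>
      (\<forall>\<delta>\<in>D_rho Ts d \<rho>. \<exists>x\<in>\<beta>. fst x = \<delta>)}"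

definition signature_pub :: "nat set set \<Rightarrow> (nat set \<Rightarrow> 'a::finite \<Rightarrow> 'a prof \<Rightarrow> 'w \<Rightarrow> real)
    \<Rightarrow> 'w::finite pmf \<Rightarrow> nat \<Rightarrow> 'a list set \<Rightarrow> ('w \<Rightarrow> ('a list \<times> 'g) pmf) \<Rightarrow> ('a list \<times> 'g)
    \<Rightarrow> 'a list \<times> ('a dev \<times> nat set \<times> 'a \<times> 'a) set" where
  "signature_pub Ts u \<mu> d Abar \<sigma> s = (rep_of Ts Abar (fst s), blocking_pub Ts u \<mu> d \<sigma> s)"

definition C_set :: "nat set set \<Rightarrow> nat \<Rightarrow> 'a::finite list set
    \<Rightarrow> ('a list \<times> ('a dev \<times> nat set \<times> 'a \<times> 'a) set) set" where
  "C_set Ts d Abar = {(ab, \<beta>). ab \<in> Abar \<and> \<beta> \<in> B_pub Ts d (profile Ts ab)}"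

end

theory Submission
  imports Defs
begin


lemma part_finite: "is_partition n Ts \<Longrightarrow> finite Ts"
proof -
  assume p: "is_partition n Ts"
  hence "Ts \<subseteq> Pow {..<n}" unfolding is_partition_def by auto
  thus ?thesis by (rule finite_subset) simp
qed

lemma part_sub: "is_partition n Ts \<Longrightarrow> T \<in> Ts \<Longrightarrow> T \<subseteq> {..<n}"
  unfolding is_partition_def by auto

lemma part_fin: "is_partition n Ts \<Longrightarrow> T \<in> Ts \<Longrightarrow> finite T"
  by (meson part_sub finite_lessThan finite_subset)

lemma part_ex: "is_partition n Ts \<Longrightarrow> i < n \<Longrightarrow> \<exists>T\<in>Ts. i \<in> T"
  unfolding is_partition_def by auto

lemma part_typ: "is_partition n Ts \<Longrightarrow> T \<in> Ts \<Longrightarrow> i \<in> T \<Longrightarrow> typ_of Ts i = T"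
  unfolding typ_of_def is_partition_def by (rule the_equality) blast+

lemma part_typ_in: "is_partition n Ts \<Longrightarrow> i < n \<Longrightarrow> typ_of Ts i \<in> Ts \<and> i \<in> typ_of Ts i"
  using part_ex part_typ by metis

lemma fibre_card:
  fixes f :: "nat \<Rightarrow> 'a::finite"
  assumes "finite A"
  shows "(\<Sum>c\<in>UNIV. card {i\<in>A. P i \<and> f i = c}) = card {i\<in>A. P i}"
proof -
  have "{i\<in>A. P i} = (\<Union>c\<in>UNIV. {i\<in>A. P i \<and> f i = c})" by auto
  hence "card {i\<in>A. P i} = card (\<Union>c\<in>UNIV. {i\<in>A. P i \<and> f i = c})" by simp
  also have "\<dots> = (\<Sum>c\<in>UNIV. card {i\<in>A. P i \<and> f i = c})"
    by (rule card_UN_disjoint) (use assms in auto)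
  finally show ?thesis by simp
qed

lemma upd_len: "length (upd xs N' a') = length xs"
  unfolding upd_def by simp

lemma upd_nth: "i < length xs \<Longrightarrow> upd xs N' a' ! i = (if i \<in> N' then a' i else xs ! i)"
  unfolding upd_def by simp

definition devof :: "nat set set \<Rightarrow> 'a list \<Rightarrow> nat set \<Rightarrow> (nat \<Rightarrow> 'a) \<Rightarrow> 'a dev" where
  "devof Ts xs N' a' = (\<lambda>T a b. if T \<in> Ts then card {i \<in> N' \<inter> T. xs!i = a \<and> a' i = b} else 0)"

lemma profile_upd:
  fixes x :: "'a::finite list"
  assumes part: "is_partition n Ts" and len: "length x = n" and sub: "N' \<subseteq> {..<n}"
    and ch: "\<forall>i\<in>N'. a' i \<noteq> x!i"
  shows "profile Ts (upd x N' a') = prof_plus (profile Ts x) (devof Ts x N' a')"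
proof (intro ext)
  fix T b
  show "profile Ts (upd x N' a') T b = prof_plus (profile Ts x) (devof Ts x N' a') T b"
  proof (cases "T \<in> Ts")
    case False thus ?thesis by (simp add: profile_def prof_plus_def devof_def)
  next
    case True
    have Tsub: "T \<subseteq> {..<n}" using part_sub[OF part True] .
    have finT: "finite T" using part_fin[OF part True] .
    define A1 where "A1 = {i\<in>T - N'. x!i = b}"
    define In where "In = {i\<in>T \<inter> N'. a' i = b}"
    define Out where "Out = {i\<in>T \<inter> N'. x!i = b}"
    have e1: "{i \<in> T. i < length (upd x N' a') \<and> upd x N' a' ! i = b} = A1 \<union> In"
      using Tsub len unfolding A1_def In_def by (auto simp: upd_len upd_nth)
    have e2: "{i \<in> T. i < length x \<and> x ! i = b} = A1 \<union> Out"
      using Tsub len unfolding A1_def Out_def by auto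
    have c1: "card (A1 \<union> In) = card A1 + card In"
      by (rule card_Un_disjoint) (use finT in \<open>auto simp: A1_def In_def\<close>)
    have c2: "card (A1 \<union> Out) = card A1 + card Out"
      by (rule card_Un_disjoint) (use finT in \<open>auto simp: A1_def Out_def\<close>)
    have finNT: "finite (N' \<inter> T)" using finT by simp
    have s1: "(\<Sum>a''\<in>UNIV. devof Ts x N' a' T a'' b) = card In"
    proof -
      have "(\<Sum>a''\<in>UNIV. devof Ts x N' a' T a'' b) = (\<Sum>a''\<in>UNIV. card {i \<in> N' \<inter> T. a' i = b \<and> x!i = a''})"
        using True unfolding devof_def by (simp add: conj_commute)
      also have "\<dots> = card {i \<in> N' \<inter> T. a' i = b}" by (rule fibre_card[OF finNT])
      finally show ?thesis unfolding In_def by (simp add: Int_commute)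
    qed
    have s2: "(\<Sum>a''\<in>UNIV. devof Ts x N' a' T b a'') = card Out"
    proof -
      have "(\<Sum>a''\<in>UNIV. devof Ts x N' a' T b a'') = (\<Sum>a''\<in>UNIV. card {i \<in> N' \<inter> T. x!i = b \<and> a' i = a''})"
        using True unfolding devof_def by simp
      also have "\<dots> = card {i \<in> N' \<inter> T. x!i = b}" by (rule fibre_card[OF finNT])
      finally show ?thesis unfolding Out_def by (simp add: Int_commute)
    qed
    show ?thesis using True e1 e2 c1 c2 s1 s2 by (simp add: profile_def prof_plus_def)
  qed
qed


lemma devof_size:
  fixes x :: "'a::finite list"
  assumes part: "is_partition n Ts" and sub: "N' \<subseteq> {..<n}"
  shows "dev_size Ts (devof Ts x N' a') = card N'"
proof -
  have finTs: "finite Ts" using part_finite[OF part] .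
  have "dev_size Ts (devof Ts x N' a') = (\<Sum>T\<in>Ts. \<Sum>a\<in>UNIV. \<Sum>b\<in>UNIV. card {i \<in> N' \<inter> T. x!i = a \<and> a' i = b})"
    unfolding dev_size_def devof_def by simp
  also have "\<dots> = (\<Sum>T\<in>Ts. card (N' \<inter> T))"
  proof (rule sum.cong[OF refl])
    fix T assume T: "T \<in> Ts"
    have fin: "finite (N' \<inter> T)" using part_fin[OF part T] by simp
    have "(\<Sum>a\<in>UNIV. \<Sum>b\<in>UNIV. card {i \<in> N' \<inter> T. x!i = a \<and> a' i = b}) = (\<Sum>a\<in>UNIV. card {i \<in> N' \<inter> T. x!i = a})"
      by (rule sum.cong[OF refl]) (rule fibre_card[OF fin])
    also have "\<dots> = (\<Sum>a\<in>UNIV. card {i \<in> N' \<inter> T. True \<and> x!i = a})" by simp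
    also have "\<dots> = card {i \<in> N' \<inter> T. True}" by (rule fibre_card[OF fin])
    also have "{i \<in> N' \<inter> T. True} = N' \<inter> T" by blast
    finally show "(\<Sum>a\<in>UNIV. \<Sum>b\<in>UNIV. card {i \<in> N' \<inter> T. x!i = a \<and> a' i = b}) = card (N' \<inter> T)" .
  qed
  also have "\<dots> = card (\<Union>T\<in>Ts. N' \<inter> T)"
  proof (rule card_UN_disjoint[symmetric])
    show "finite Ts" by fact
    show "\<forall>T\<in>Ts. finite (N' \<inter> T)" using part_fin[OF part] by blast
    show "\<forall>T\<in>Ts. \<forall>T'\<in>Ts. T \<noteq> T' \<longrightarrow> (N' \<inter> T) \<inter> (N' \<inter> T') = {}"
      using part unfolding is_partition_def by blast
  qed
  also have "(\<Union>T\<in>Ts. N' \<inter> T) = N'"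
  proof -
    have u: "\<Union>Ts = {..<n}" using part unfolding is_partition_def by blast
    have "(\<Union>T\<in>Ts. N' \<inter> T) = N' \<inter> \<Union>Ts" by blast
    thus ?thesis using u sub by auto
  qed
  finally show ?thesis .
qed

lemma devof_D_rho:
  fixes x :: "'a::finite list"
  assumes part: "is_partition n Ts" and len: "length x = n" and sub: "N' \<subseteq> {..<n}"
    and ch: "\<forall>i\<in>N'. a' i \<noteq> x!i" and ne: "N' \<noteq> {}" and cd: "card N' \<le> d"
  shows "devof Ts x N' a' \<in> D_rho Ts d (profile Ts x)"
proof -
  have finN: "finite N'" using sub finite_subset by blast
  have sz: "dev_size Ts (devof Ts x N' a') = card N'" by (rule devof_size[OF part sub])
  have pos: "1 \<le> card N'" using finN ne by (simp add: Suc_le_eq card_gt_0_iff)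
  have diag: "\<forall>T a. devof Ts x N' a' T a a = 0"
  proof (intro allI)
    fix T a
    have e: "{i \<in> N' \<inter> T. x!i = a \<and> a' i = a} = {}" using ch by auto
    show "devof Ts x N' a' T a a = 0" unfolding devof_def e by (simp only: card.empty if_cancel)
  qed
  have out: "\<forall>T\<in>Ts. \<forall>a. (\<Sum>b\<in>UNIV. devof Ts x N' a' T a b) \<le> profile Ts x T a"
  proof (intro ballI allI)
    fix T a assume T: "T \<in> Ts"
    have fin: "finite (N' \<inter> T)" using part_fin[OF part T] by simp
    have "(\<Sum>b\<in>UNIV. devof Ts x N' a' T a b) = card {i \<in> N' \<inter> T. x!i = a}"
      using T unfolding devof_def by (simp only: T if_True) (rule fibre_card[OF fin])
    also have "\<dots> \<le> card {i \<in> T. i < length x \<and> x ! i = a}"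
      by (rule card_mono) (use part_fin[OF part T] sub len in auto)
    finally show "(\<Sum>b\<in>UNIV. devof Ts x N' a' T a b) \<le> profile Ts x T a"
      using T unfolding profile_def by simp
  qed
  show ?thesis unfolding D_rho_def D_star_def
    using sz pos cd diag out by (auto simp: devof_def)
qed

lemma assign:
  fixes k :: "'b \<Rightarrow> nat"
  assumes "finite B"
  shows "finite A \<Longrightarrow> (\<Sum>b\<in>B. k b) \<le> card A \<Longrightarrow>
    \<exists>f. (\<forall>i. f i \<noteq> None \<longrightarrow> i \<in> A \<and> the (f i) \<in> B) \<and> (\<forall>b\<in>B. card {i\<in>A. f i = Some b} = k b)"
  using assms
proof (induction B arbitrary: A rule: finite_induct)
  case empty
  show ?case by (rule exI[of _ "\<lambda>_. None"]) simp
next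
  case (insert b B)
  have "k b \<le> card A" using insert by simp
  then obtain S where S: "S \<subseteq> A" "card S = k b" "finite S" by (rule obtain_subset_with_card_n)
  have "(\<Sum>b\<in>B. k b) \<le> card (A - S)"
    using insert S by (simp add: card_Diff_subset)
  then obtain f where f1: "\<forall>i. f i \<noteq> None \<longrightarrow> i \<in> A - S \<and> the (f i) \<in> B"
    and f2: "\<forall>b\<in>B. card {i\<in>A - S. f i = Some b} = k b"
    using insert by blast
  define g where "g = (\<lambda>i. if i \<in> S then Some b else f i)"
  have g1: "\<forall>i. g i \<noteq> None \<longrightarrow> i \<in> A \<and> the (g i) \<in> insert b B"
    using f1 S unfolding g_def by auto
  have "{i\<in>A. g i = Some b} = S"
  proof -
    have "\<And>i. f i = Some b \<Longrightarrow> False" using f1 insert(2)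
      by (metis option.distinct(1) option.sel)
    thus ?thesis using S unfolding g_def by auto
  qed
  moreover have "\<forall>c\<in>B. {i\<in>A. g i = Some c} = {i\<in>A - S. f i = Some c}"
    using insert(2) unfolding g_def by auto
  ultimately have g2: "\<forall>c\<in>insert b B. card {i\<in>A. g i = Some c} = k c"
    using S f2 by auto
  show ?case using g1 g2 by blast
qed

lemma realize:
  fixes x :: "'a::finite list"
  assumes part: "is_partition n Ts" and len: "length x = n"
    and del: "\<delta> \<in> D_rho Ts d (profile Ts x)"
  shows "\<exists>N' a'. N' \<subseteq> {..<n} \<and> (\<forall>i\<in>N'. a' i \<noteq> x!i) \<and> devof Ts x N' a' = \<delta>"
proof -
  define A where "A = (\<lambda>T a. {i\<in>T. x!i = a})"
  have "\<forall>p. \<exists>f. fst p \<in> Ts \<longrightarrow> (\<forall>i. f i \<noteq> None \<longrightarrow> i \<in> A (fst p) (snd p)) \<and>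
          (\<forall>b. card {i\<in>A (fst p) (snd p). f i = Some b} = \<delta> (fst p) (snd p) b)"
  proof
    fix p :: "nat set \<times> 'a"
    obtain T a where p: "p = (T, a)" by (cases p)
    show "\<exists>f. fst p \<in> Ts \<longrightarrow> (\<forall>i. f i \<noteq> None \<longrightarrow> i \<in> A (fst p) (snd p)) \<and>
          (\<forall>b. card {i\<in>A (fst p) (snd p). f i = Some b} = \<delta> (fst p) (snd p) b)"
    proof (cases "T \<in> Ts")
      case False thus ?thesis using p by simp
    next
      case True
      have Tsub: "T \<subseteq> {..<n}" using part_sub[OF part True] .
      have fin: "finite (A T a)" using part_fin[OF part True] unfolding A_def by simp
      have "(\<Sum>b\<in>UNIV. \<delta> T a b) \<le> profile Ts x T a"
        using del True unfolding D_rho_def by blast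
      also have "profile Ts x T a = card (A T a)"
      proof -
        have "{i \<in> T. i < length x \<and> x ! i = a} = {i \<in> T. x ! i = a}" using Tsub len by auto
        thus ?thesis using True unfolding profile_def A_def by simp
      qed
      finally obtain f where "(\<forall>i. f i \<noteq> None \<longrightarrow> i \<in> A T a \<and> the (f i) \<in> UNIV) \<and>
          (\<forall>b\<in>UNIV. card {i\<in>A T a. f i = Some b} = \<delta> T a b)"
        using assign[of "UNIV :: 'a set" "A T a" "\<delta> T a"] fin by auto
      thus ?thesis using p by auto
    qed
  qed
  then obtain G where G: "\<forall>p. fst p \<in> Ts \<longrightarrow> (\<forall>i. G p i \<noteq> None \<longrightarrow> i \<in> A (fst p) (snd p)) \<and>
          (\<forall>b. card {i\<in>A (fst p) (snd p). G p i = Some b} = \<delta> (fst p) (snd p) b)"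
    by (rule choice[THEN exE]) blast
  define g where "g = (\<lambda>i. G (typ_of Ts i, x!i) i)"
  define N' where "N' = {i. i < n \<and> g i \<noteq> None}"
  define a' where "a' = (\<lambda>i. the (g i))"
  have dS: "\<delta> \<in> D_star Ts d" using del unfolding D_rho_def by blast
  have ch: "\<forall>i\<in>N'. a' i \<noteq> x!i"
  proof
    fix i assume i: "i \<in> N'"
    hence "i < n" unfolding N'_def by auto
    then have T: "typ_of Ts i \<in> Ts" "i \<in> typ_of Ts i" using part_typ_in[OF part] by auto
    let ?T = "typ_of Ts i"
    show "a' i \<noteq> x!i"
    proof
      assume eq: "a' i = x!i"
      have "g i = Some (x!i)" using i eq unfolding N'_def a'_def by auto
      hence "i \<in> {j\<in>A ?T (x!i). G (?T, x!i) j = Some (x!i)}"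
        using T unfolding A_def g_def by auto
      moreover have "card {j\<in>A ?T (x!i). G (?T, x!i) j = Some (x!i)} = 0"
        using G T dS unfolding D_star_def by auto
      moreover have "finite (A ?T (x!i))" using part_fin[OF part T(1)] unfolding A_def by simp
      ultimately show False by auto
    qed
  qed
  have eqd: "devof Ts x N' a' = \<delta>"
  proof (intro ext)
    fix T a b
    show "devof Ts x N' a' T a b = \<delta> T a b"
    proof (cases "T \<in> Ts")
      case False thus ?thesis using dS unfolding devof_def D_star_def by auto
    next
      case True
      have Tsub: "T \<subseteq> {..<n}" using part_sub[OF part True] .
      have "{i \<in> N' \<inter> T. x!i = a \<and> a' i = b} = {i\<in>A T a. G (T, a) i = Some b}"
      proof (intro set_eqI iffI)
        fix i assume i: "i \<in> {i \<in> N' \<inter> T. x!i = a \<and> a' i = b}"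
        hence ty: "typ_of Ts i = T" using part_typ[OF part True] by auto
        show "i \<in> {i\<in>A T a. G (T, a) i = Some b}"
          using i ty unfolding N'_def a'_def g_def A_def by auto
      next
        fix i assume i: "i \<in> {i\<in>A T a. G (T, a) i = Some b}"
        hence iT: "i \<in> T" unfolding A_def by auto
        hence ty: "typ_of Ts i = T" using part_typ[OF part True] by auto
        show "i \<in> {i \<in> N' \<inter> T. x!i = a \<and> a' i = b}"
          using i ty iT Tsub unfolding N'_def a'_def g_def A_def by auto
      qed
      thus ?thesis using True G unfolding devof_def by auto
    qed
  qed
  have "N' \<subseteq> {..<n}" unfolding N'_def by auto
  thus ?thesis using ch eqd by blast
qed



lemma finite_joint: "finite (joint n :: 'a::finite list set)"
proof -
  have "joint n = {xs :: 'a list. set xs \<subseteq> UNIV \<and> length xs = n}" unfolding joint_def by auto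
  thus ?thesis using finite_lists_length_eq[of "UNIV :: 'a set" n] by simp
qed

lemma post_pub_eq: "post_pub \<mu> \<sigma> s xt \<omega> = (if xt = fst s then post_world \<mu> \<sigma> s \<omega> else 0)"
proof (cases "xt = fst s")
  case True
  hence e: "{s'. fst s' = xt \<and> s' = s} = {s}" by auto
  show ?thesis using True unfolding post_pub_def post_world_def e by (simp add: measure_pmf_single)
next
  case False
  hence e: "{s'. fst s' = xt \<and> s' = s} = {}" by auto
  show ?thesis using False unfolding post_pub_def e by simp
qed

lemma sum_post_pub:
  fixes s :: "'a::finite list \<times> 'g"
  assumes "fst s \<in> joint n"
  shows "(\<Sum>xt\<in>joint n. \<Sum>\<omega>\<in>UNIV. post_pub \<mu> \<sigma> s xt \<omega> * f xt \<omega>) = (\<Sum>\<omega>\<in>UNIV. post_world \<mu> \<sigma> s \<omega> * f (fst s) \<omega>)"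
proof -
  have "(\<Sum>xt\<in>joint n. \<Sum>\<omega>\<in>UNIV. post_pub \<mu> \<sigma> s xt \<omega> * f xt \<omega>)
      = (\<Sum>xt\<in>joint n. if xt = fst s then (\<Sum>\<omega>\<in>UNIV. post_world \<mu> \<sigma> s \<omega> * f xt \<omega>) else 0)"
    by (rule sum.cong[OF refl]) (simp add: post_pub_eq)
  also have "\<dots> = (\<Sum>\<omega>\<in>UNIV. post_world \<mu> \<sigma> s \<omega> * f (fst s) \<omega>)"
    by (subst sum.delta[OF finite_joint]) (simp add: assms)
  finally show ?thesis .
qed

lemma unstable_iff:
  fixes s :: "'a::finite list \<times> 'g"
  assumes "fst s \<in> joint n"
  shows "unstable_pub n Ts u \<mu> d \<sigma> s \<longleftrightarrow>
     (\<exists>N' a'. N' \<noteq> {} \<and> N' \<subseteq> {..<n} \<and> card N' \<le> d \<and>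
        (\<forall>i\<in>N'. (\<Sum>\<omega>\<in>UNIV. post_world \<mu> \<sigma> s \<omega> *
              (agent_util Ts u (upd (fst s) N' a') i \<omega> - agent_util Ts u (fst s) i \<omega>)) > 0))"
  unfolding unstable_pub_def
  using sum_post_pub[OF assms, of \<mu> \<sigma>] by simp

lemma gain_eq:
  assumes "i \<in> N'" "i < length x"
  shows "(\<Sum>\<omega>\<in>UNIV. p \<omega> * (agent_util Ts u (upd x N' a') i \<omega> - agent_util Ts u x i \<omega>))
     = type_util u (typ_of Ts i) (a' i) (profile Ts (upd x N' a')) p - type_util u (typ_of Ts i) (x!i) (profile Ts x) p"
  using assms unfolding agent_util_def type_util_def
  by (simp add: upd_nth right_diff_distrib sum_subtractf)

lemma weight:
  "(\<Sum>\<omega>\<in>UNIV. pmf \<mu> \<omega> * pmf (\<sigma> \<omega>) s * h \<omega>) = sig_prob \<mu> \<sigma> s * (\<Sum>\<omega>\<in>UNIV. post_world \<mu> \<sigma> s \<omega> * h \<omega>)"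
proof (cases "sig_prob \<mu> \<sigma> s = 0")
  case True
  have "\<forall>\<omega>\<in>UNIV. pmf \<mu> \<omega> * pmf (\<sigma> \<omega>) s = 0"
    using True unfolding sig_prob_def by (subst (asm) sum_nonneg_eq_0_iff) auto
  hence "\<forall>\<omega>\<in>UNIV. pmf \<mu> \<omega> * pmf (\<sigma> \<omega>) s * h \<omega> = 0" by simp
  hence "(\<Sum>\<omega>\<in>UNIV. pmf \<mu> \<omega> * pmf (\<sigma> \<omega>) s * h \<omega>) = 0" by (rule sum.neutral)
  thus ?thesis using True by simp
next
  case False
  thus ?thesis unfolding post_world_def by (simp add: sum_distrib_left)
qed

lemma post_world_zero: "sig_prob \<mu> \<sigma> s = 0 \<Longrightarrow> post_world \<mu> \<sigma> s \<omega> = 0"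
  unfolding post_world_def by simp



lemma blocking_mem:
  "(\<delta>, T, a, b) \<in> blocking_pub Ts u \<mu> d \<sigma> s \<longleftrightarrow>
    \<delta> \<in> D_rho Ts d (profile Ts (fst s)) \<and> T \<in> Ts \<and> \<delta> T a b > 0 \<and>
    type_util u T a (profile Ts (fst s)) (post_world \<mu> \<sigma> s) \<ge> type_util u T b (prof_plus (profile Ts (fst s)) \<delta>) (post_world \<mu> \<sigma> s)"
  unfolding blocking_pub_def Let_def by simp

lemma sig_prob_nonneg: "sig_prob \<mu> \<sigma> s \<ge> 0"
  unfolding sig_prob_def by (intro sum_nonneg) simp

lemma stable_cover:
  fixes s :: "'a::finite list \<times> 'g" and \<mu> :: "'w::finite pmf"
  assumes part: "is_partition n Ts" and js: "fst s \<in> joint n"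
    and st: "sig_prob \<mu> \<sigma> s > 0 \<Longrightarrow> \<not> unstable_pub n Ts u \<mu> d \<sigma> s"
    and del: "\<delta> \<in> D_rho Ts d (profile Ts (fst s))"
  shows "\<exists>y\<in>blocking_pub Ts u \<mu> d \<sigma> s. fst y = \<delta>"
proof (rule ccontr)
  assume no: "\<not> ?thesis"
  define x where "x = fst s"
  define \<rho> where "\<rho> = profile Ts x"
  define p where "p = post_world \<mu> \<sigma> s"
  have len: "length x = n" using js unfolding x_def joint_def by simp
  obtain N' a' where N': "N' \<subseteq> {..<n}" and ch: "\<forall>i\<in>N'. a' i \<noteq> x!i" and dv: "devof Ts x N' a' = \<delta>"
    using realize[OF part len, of \<delta> d] del unfolding x_def by blast
  have cN: "card N' = dev_size Ts \<delta>" using devof_size[OF part N', of x a'] dv by simp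
  have dS: "\<delta> \<in> D_star Ts d" using del unfolding D_rho_def by blast
  have ne: "N' \<noteq> {}" using cN dS unfolding D_star_def by auto
  have cd: "card N' \<le> d" using cN dS unfolding D_star_def by auto
  have prof: "profile Ts (upd x N' a') = prof_plus \<rho> \<delta>"
    using profile_upd[OF part len N' ch] dv unfolding \<rho>_def by simp
  have gains: "\<forall>i\<in>N'. (\<Sum>\<omega>\<in>UNIV. p \<omega> * (agent_util Ts u (upd x N' a') i \<omega> - agent_util Ts u x i \<omega>)) > 0"
  proof
    fix i assume i: "i \<in> N'"
    hence il: "i < n" using N' by auto
    define T where "T = typ_of Ts i"
    have T: "T \<in> Ts" "i \<in> T" using part_typ_in[OF part il] unfolding T_def by auto
    have fin: "finite (N' \<inter> T)" using part_fin[OF part T(1)] by simp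
    have "i \<in> {j \<in> N' \<inter> T. x!j = x!i \<and> a' j = a' i}" using i T by auto
    hence "card {j \<in> N' \<inter> T. x!j = x!i \<and> a' j = a' i} > 0"
      using fin by (metis (no_types, lifting) card_gt_0_iff empty_iff finite_subset mem_Collect_eq subsetI)
    hence pos: "\<delta> T (x!i) (a' i) > 0" using dv T unfolding devof_def by auto
    have "(\<delta>, T, x!i, a' i) \<notin> blocking_pub Ts u \<mu> d \<sigma> s" using no by force
    hence "\<not> type_util u T (x!i) \<rho> p \<ge> type_util u T (a' i) (prof_plus \<rho> \<delta>) p"
      using pos T del unfolding blocking_mem \<rho>_def p_def x_def by blast
    moreover have "(\<Sum>\<omega>\<in>UNIV. p \<omega> * (agent_util Ts u (upd x N' a') i \<omega> - agent_util Ts u x i \<omega>))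
      = type_util u T (a' i) (prof_plus \<rho> \<delta>) p - type_util u T (x!i) \<rho> p"
      using gain_eq[OF i, of x p Ts u] il len prof unfolding T_def \<rho>_def by simp
    ultimately show "(\<Sum>\<omega>\<in>UNIV. p \<omega> * (agent_util Ts u (upd x N' a') i \<omega> - agent_util Ts u x i \<omega>)) > 0"
      by simp
  qed
  show False
  proof (cases "sig_prob \<mu> \<sigma> s > 0")
    case True
    have "unstable_pub n Ts u \<mu> d \<sigma> s"
      unfolding unstable_iff[OF js] using ne N' cd gains unfolding x_def p_def by blast
    thus False using st True by blast
  next
    case False
    hence "sig_prob \<mu> \<sigma> s = 0" using sig_prob_nonneg[of \<mu> \<sigma> s] by linarith
    hence "\<forall>\<omega>. p \<omega> = 0" unfolding p_def by (simp add: post_world_zero)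
    moreover obtain i where "i \<in> N'" using ne by blast
    ultimately show False using gains by force
  qed
qed

lemma stable_from_blocking:
  fixes s :: "'a::finite list \<times> 'g" and \<mu> :: "'w::finite pmf"
  assumes part: "is_partition n Ts" and js: "fst s \<in> joint n"
    and cov: "\<forall>\<delta>\<in>D_rho Ts d (profile Ts (fst s)). \<exists>y\<in>blocking_pub Ts u \<mu> d \<sigma> s. fst y = \<delta>"
  shows "\<not> unstable_pub n Ts u \<mu> d \<sigma> s"
proof
  assume "unstable_pub n Ts u \<mu> d \<sigma> s"
  then obtain N' a' where ne: "N' \<noteq> {}" and sub: "N' \<subseteq> {..<n}" and cd: "card N' \<le> d"
    and gains: "\<forall>i\<in>N'. (\<Sum>\<omega>\<in>UNIV. post_world \<mu> \<sigma> s \<omega> *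
              (agent_util Ts u (upd (fst s) N' a') i \<omega> - agent_util Ts u (fst s) i \<omega>)) > 0"
    unfolding unstable_iff[OF js] by blast
  define x where "x = fst s"
  define \<rho> where "\<rho> = profile Ts x"
  define p where "p = post_world \<mu> \<sigma> s"
  have len: "length x = n" using js unfolding x_def joint_def by simp
  define N2 where "N2 = {i\<in>N'. a' i \<noteq> x!i}"
  have eqU: "upd x N' a' = upd x N2 a'"
    by (rule nth_equalityI) (auto simp: upd_len upd_nth N2_def)
  have N2sub: "N2 \<subseteq> {..<n}" using sub unfolding N2_def by auto
  have ch: "\<forall>i\<in>N2. a' i \<noteq> x!i" unfolding N2_def by auto
  show False
  proof (cases "N2 = {}")
    case True
    have "upd x N2 a' = x" using True by (intro nth_equalityI) (auto simp: upd_len upd_nth)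
    moreover obtain i where "i \<in> N'" using ne by blast
    ultimately show False using gains eqU unfolding x_def by force
  next
    case False
    have finN: "finite N'" using sub finite_subset by blast
    have "card N2 \<le> card N'" using finN unfolding N2_def by (intro card_mono) auto
    hence cd2: "card N2 \<le> d" using cd by simp
    define \<delta> where "\<delta> = devof Ts x N2 a'"
    have del: "\<delta> \<in> D_rho Ts d \<rho>" unfolding \<delta>_def \<rho>_def
      by (rule devof_D_rho[OF part len N2sub ch False cd2])
    then obtain y where y: "y \<in> blocking_pub Ts u \<mu> d \<sigma> s" "fst y = \<delta>"
      using cov unfolding \<rho>_def x_def by blast
    obtain T a b where yeq: "y = (\<delta>, T, a, b)" using y(2) by (cases y) auto
    have T: "T \<in> Ts" and pos: "\<delta> T a b > 0"
      and ineq: "type_util u T a \<rho> p \<ge> type_util u T b (prof_plus \<rho> \<delta>) p"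
      using y(1) unfolding yeq blocking_mem \<rho>_def p_def x_def by auto
    have "card {i \<in> N2 \<inter> T. x!i = a \<and> a' i = b} > 0" using pos T unfolding \<delta>_def devof_def by simp
    hence "{i \<in> N2 \<inter> T. x!i = a \<and> a' i = b} \<noteq> {}" unfolding card_gt_0_iff by (rule conjunct1)
    then obtain i where "i \<in> {i \<in> N2 \<inter> T. x!i = a \<and> a' i = b}" by blast
    hence i: "i \<in> N2" "i \<in> T" "x!i = a" "a' i = b" by auto
    have iN: "i \<in> N'" using i unfolding N2_def by auto
    have il: "i < n" using iN sub by auto
    have ty: "typ_of Ts i = T" using part_typ[OF part T i(2)] .
    have prof: "profile Ts (upd x N' a') = prof_plus \<rho> \<delta>"
      using profile_upd[OF part len N2sub ch] eqU unfolding \<delta>_def \<rho>_def by simp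
    have "(\<Sum>\<omega>\<in>UNIV. p \<omega> * (agent_util Ts u (upd x N' a') i \<omega> - agent_util Ts u x i \<omega>))
      = type_util u T b (prof_plus \<rho> \<delta>) p - type_util u T a \<rho> p"
      using gain_eq[OF iN, of x p Ts u] il len prof ty i unfolding \<rho>_def by simp
    moreover have "(\<Sum>\<omega>\<in>UNIV. p \<omega> * (agent_util Ts u (upd x N' a') i \<omega> - agent_util Ts u x i \<omega>)) > 0"
      using gains iN unfolding p_def x_def by blast
    ultimately show False using ineq by simp
  qed
qed



lemma pmf_map_fin:
  assumes "finite S" "\<And>s. s \<in> set_pmf M \<Longrightarrow> f s = c \<Longrightarrow> s \<in> S" "\<And>s. s \<in> S \<Longrightarrow> f s = c"
  shows "pmf (map_pmf f M) c = (\<Sum>s\<in>S. pmf M s)"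
proof -
  have "pmf (map_pmf f M) c = measure_pmf.prob M (f -` {c})" by (rule pmf_map)
  also have "\<dots> = measure_pmf.prob M (f -` {c} \<inter> set_pmf M)" by (rule measure_Int_set_pmf[symmetric])
  also have "f -` {c} \<inter> set_pmf M = S \<inter> set_pmf M" using assms(2,3) by auto
  also have "measure_pmf.prob M (S \<inter> set_pmf M) = measure_pmf.prob M S" by (rule measure_Int_set_pmf)
  also have "\<dots> = (\<Sum>s\<in>S. pmf M s)" by (rule measure_measure_pmf_finite[OF assms(1)])
  finally show ?thesis .
qed

lemma type_util_diff:
  "type_util u T a \<rho> q - type_util u T b \<rho>' q = (\<Sum>\<omega>\<in>UNIV. q \<omega> * (u T a \<rho> \<omega> - u T b \<rho>' \<omega>))"
  unfolding type_util_def by (simp add: right_diff_distrib sum_subtractf)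

lemma sum_fin_expect:
  fixes M :: "'s pmf" and f :: "'s \<Rightarrow> real"
  assumes "finite (set_pmf M)"
  shows "(\<Sum>s\<in>set_pmf M. pmf M s * f s) = measure_pmf.expectation M f"
proof -
  have "measure_pmf.expectation M f = (\<Sum>a\<in>set_pmf M. f a * pmf M a)"
    by (rule integral_measure_pmf_real[OF assms]) auto
  thus ?thesis by (simp add: mult.commute)
qed

theorem theorem1:
  fixes n d :: nat
    and Ts :: "nat set set"
    and \<mu> :: "'w::finite pmf"
    and u :: "nat set \<Rightarrow> 'a::finite \<Rightarrow> 'a prof \<Rightarrow> 'w \<Rightarrow> real"
    and u0 :: "'a prof \<Rightarrow> 'w \<Rightarrow> real"
    and Abar :: "'a list set"
    and \<sigma> :: "'w \<Rightarrow> ('a list \<times> 'g) pmf"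
  assumes "is_partition n Ts"
    and "d \<ge> 1"
    and "is_rep_set n Ts Abar"
    and "stable_pub_policy n Ts u \<mu> d \<sigma>"
  shows "\<exists>\<sigma>b :: 'w \<Rightarrow> ('a list \<times> ('a dev \<times> nat set \<times> 'a \<times> 'a) set) pmf.
           stable_pub_policy n Ts u \<mu> d \<sigma>b
         \<and> (\<forall>\<omega>. set_pmf (\<sigma>b \<omega>) \<subseteq> C_set Ts d Abar)
         \<and> principal_util Ts u0 \<mu> \<sigma>b \<ge> principal_util Ts u0 \<mu> \<sigma>
         \<and> (\<forall>c\<in>C_set Ts d Abar. sig_prob \<mu> \<sigma>b c > 0 \<longrightarrow> signature_pub Ts u \<mu> d Abar \<sigma>b c = c)"
proof -
  note part = assms(1)
  have pol: "is_policy n \<sigma>" and stab: "\<forall>s. sig_prob \<mu> \<sigma> s > 0 \<longrightarrow> \<not> unstable_pub n Ts u \<mu> d \<sigma> s"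
    using assms(4) unfolding stable_pub_policy_def by auto
  have Abar_j: "Abar \<subseteq> joint n" using assms(3) unfolding is_rep_set_def by blast
  have rep1: "rep_of Ts Abar xs \<in> Abar \<and> profile Ts (rep_of Ts Abar xs) = profile Ts xs" if "xs \<in> joint n" for xs
  proof -
    have "\<exists>!ab. ab \<in> Abar \<and> profile Ts ab = profile Ts xs" using assms(3) that unfolding is_rep_set_def by blast
    from theI'[OF this] show ?thesis unfolding rep_of_def .
  qed
  have rep2: "rep_of Ts Abar ab = ab" if "ab \<in> Abar" for ab
  proof -
    have "\<exists>!ab'. ab' \<in> Abar \<and> profile Ts ab' = profile Ts ab" using assms(3) that Abar_j unfolding is_rep_set_def by blast
    thus ?thesis unfolding rep_of_def using that by (metis (mono_tags, lifting) the_equality)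
  qed
  define sig where "sig = signature_pub Ts u \<mu> d Abar \<sigma>"
  define \<sigma>b where "\<sigma>b = (\<lambda>\<omega>. map_pmf sig (\<sigma> \<omega>))"
  define S0 where "S0 = (\<Union>\<omega>. set_pmf (\<sigma> \<omega>))"
  have finS0: "finite S0" using pol unfolding S0_def is_policy_def by simp
  have jS0: "fst s \<in> joint n" if "s \<in> S0" for s using pol that unfolding S0_def is_policy_def by blast
  have cov: "\<forall>\<delta>\<in>D_rho Ts d (profile Ts (fst s)). \<exists>y\<in>blocking_pub Ts u \<mu> d \<sigma> s. fst y = \<delta>" if "s \<in> S0" for s
    using stable_cover[OF part jS0[OF that]] stab by blast
  have inB: "blocking_pub Ts u \<mu> d \<sigma> s \<in> B_pub Ts d (profile Ts (fst s))" if "s \<in> S0" for s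
  proof -
    have "blocking_pub Ts u \<mu> d \<sigma> s \<subseteq> D_rho Ts d (profile Ts (fst s)) \<times> Ts \<times> UNIV \<times> UNIV"
      by (auto simp: blocking_mem)
    moreover have "\<forall>(\<delta>, T, a, a')\<in>blocking_pub Ts u \<mu> d \<sigma> s. \<delta> T a a' > 0"
      by (auto simp: blocking_mem)
    ultimately show ?thesis using cov[OF that] unfolding B_pub_def by blast
  qed
  have sigC: "sig s \<in> C_set Ts d Abar \<and> profile Ts (fst (sig s)) = profile Ts (fst s)
      \<and> fst (sig s) = rep_of Ts Abar (fst s) \<and> snd (sig s) = blocking_pub Ts u \<mu> d \<sigma> s" if "s \<in> S0" for s
    using rep1[OF jS0[OF that]] inB[OF that] unfolding sig_def signature_pub_def C_set_def by auto
  have setb: "set_pmf (\<sigma>b \<omega>) = sig ` set_pmf (\<sigma> \<omega>)" for \<omega> unfolding \<sigma>b_def by simp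
  have C1: "\<forall>\<omega>. set_pmf (\<sigma>b \<omega>) \<subseteq> C_set Ts d Abar"
    using sigC unfolding setb S0_def by blast
  have polb: "is_policy n \<sigma>b"
    unfolding is_policy_def
  proof
    fix \<omega>
    have "finite (set_pmf (\<sigma>b \<omega>))" using pol unfolding setb is_policy_def by simp
    moreover have "fst ` set_pmf (\<sigma>b \<omega>) \<subseteq> joint n"
    proof
      fix z assume "z \<in> fst ` set_pmf (\<sigma>b \<omega>)"
      then obtain c where c: "c \<in> set_pmf (\<sigma>b \<omega>)" "z = fst c" by blast
      hence "c \<in> C_set Ts d Abar" using C1 by blast
      hence "fst c \<in> Abar" by (cases c) (auto simp: C_set_def)
      thus "z \<in> joint n" using c Abar_j by blast
    qed
    ultimately show "finite (set_pmf (\<sigma>b \<omega>)) \<and> fst ` set_pmf (\<sigma>b \<omega>) \<subseteq> joint n" by blast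
  qed
  have key: "blocking_pub Ts u \<mu> d \<sigma>b c = snd c \<and> rep_of Ts Abar (fst c) = fst c \<and> c \<in> C_set Ts d Abar
      \<and> fst c \<in> joint n" if Pb: "sig_prob \<mu> \<sigma>b c > 0" for c
  proof -
    obtain \<omega>0 where w0: "pmf \<mu> \<omega>0 * pmf (\<sigma>b \<omega>0) c \<noteq> 0"
      using Pb unfolding sig_prob_def by (metis (no_types, lifting) less_irrefl sum.neutral)
    hence "c \<in> set_pmf (\<sigma>b \<omega>0)" by (simp add: set_pmf_iff)
    then obtain s0 where s0: "s0 \<in> set_pmf (\<sigma> \<omega>0)" "c = sig s0" unfolding setb by blast
    have s0S: "s0 \<in> S0" using s0 unfolding S0_def by blast
    define S where "S = {s\<in>S0. sig s = c}"
    have finS: "finite S" using finS0 unfolding S_def by simp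
    have s0S': "s0 \<in> S" using s0S s0 unfolding S_def by simp
    have cC: "c \<in> C_set Ts d Abar" using sigC[OF s0S] s0 by simp
    have fcA: "fst c \<in> Abar" using cC unfolding C_set_def by auto
    have repc: "rep_of Ts Abar (fst c) = fst c" using rep2[OF fcA] .
    have jc: "fst c \<in> joint n" using fcA Abar_j by blast
    define \<rho> where "\<rho> = profile Ts (fst c)"
    have Sprof: "profile Ts (fst s) = \<rho>" "blocking_pub Ts u \<mu> d \<sigma> s = snd c" if "s \<in> S" for s
      using sigC[of s] that unfolding S_def \<rho>_def by auto
    have pmfb: "pmf (\<sigma>b \<omega>) c = (\<Sum>s\<in>S. pmf (\<sigma> \<omega>) s)" for \<omega>
      unfolding \<sigma>b_def by (rule pmf_map_fin[OF finS]) (auto simp: S_def S0_def)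
    have comb: "sig_prob \<mu> \<sigma>b c * (\<Sum>\<omega>\<in>UNIV. post_world \<mu> \<sigma>b c \<omega> * h \<omega>)
        = (\<Sum>s\<in>S. sig_prob \<mu> \<sigma> s * (\<Sum>\<omega>\<in>UNIV. post_world \<mu> \<sigma> s \<omega> * h \<omega>))" for h
    proof -
      have "sig_prob \<mu> \<sigma>b c * (\<Sum>\<omega>\<in>UNIV. post_world \<mu> \<sigma>b c \<omega> * h \<omega>)
          = (\<Sum>\<omega>\<in>UNIV. pmf \<mu> \<omega> * pmf (\<sigma>b \<omega>) c * h \<omega>)" by (rule weight[symmetric])
      also have "\<dots> = (\<Sum>\<omega>\<in>UNIV. \<Sum>s\<in>S. pmf \<mu> \<omega> * pmf (\<sigma> \<omega>) s * h \<omega>)"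
        by (simp add: pmfb sum_distrib_left sum_distrib_right)
      also have "\<dots> = (\<Sum>s\<in>S. \<Sum>\<omega>\<in>UNIV. pmf \<mu> \<omega> * pmf (\<sigma> \<omega>) s * h \<omega>)" by (rule sum.swap)
      also have "\<dots> = (\<Sum>s\<in>S. sig_prob \<mu> \<sigma> s * (\<Sum>\<omega>\<in>UNIV. post_world \<mu> \<sigma> s \<omega> * h \<omega>))"
        by (simp add: weight)
      finally show ?thesis .
    qed
    have Pbsum: "sig_prob \<mu> \<sigma>b c = (\<Sum>s\<in>S. sig_prob \<mu> \<sigma> s)"
      unfolding sig_prob_def pmfb by (simp add: sum_distrib_left sum.swap[of _ UNIV])
    obtain s1 where s1: "s1 \<in> S" "sig_prob \<mu> \<sigma> s1 > 0"
    proof (rule ccontr)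
      assume "\<not> thesis"
      hence "\<forall>s\<in>S. sig_prob \<mu> \<sigma> s = 0" using that sig_prob_nonneg[of \<mu> \<sigma>]
        by (metis less_eq_real_def)
      hence "sig_prob \<mu> \<sigma>b c = 0" unfolding Pbsum by simp
      thus False using Pb by simp
    qed
    have blk: "blocking_pub Ts u \<mu> d \<sigma>b c = snd c"
    proof (intro set_eqI)
      fix y :: "'a dev \<times> nat set \<times> 'a \<times> 'a"
      obtain \<delta> T a b where y: "y = (\<delta>, T, a, b)" by (cases y) auto
      define cond where "cond = (\<delta> \<in> D_rho Ts d \<rho> \<and> T \<in> Ts \<and> \<delta> T a b > 0)"
      define h where "h = (\<lambda>\<omega>. u T a \<rho> \<omega> - u T b (prof_plus \<rho> \<delta>) \<omega>)"
      define E where "E = (\<lambda>q. (\<Sum>\<omega>\<in>UNIV. q \<omega> * h \<omega>))"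
      have memb: "y \<in> blocking_pub Ts u \<mu> d \<sigma>b c \<longleftrightarrow> cond \<and> E (post_world \<mu> \<sigma>b c) \<ge> 0"
        unfolding y blocking_mem cond_def E_def h_def \<rho>_def
        using type_util_diff[of u T a "profile Ts (fst c)" "post_world \<mu> \<sigma>b c" b "prof_plus (profile Ts (fst c)) \<delta>"]
        by linarith
      have mems: "y \<in> snd c \<longleftrightarrow> cond \<and> E (post_world \<mu> \<sigma> s) \<ge> 0" if "s \<in> S" for s
        unfolding Sprof(2)[OF that, symmetric] y blocking_mem cond_def E_def h_def Sprof(1)[OF that]
        using type_util_diff[of u T a \<rho> "post_world \<mu> \<sigma> s" b "prof_plus \<rho> \<delta>"]
        by linarith
      have cm: "sig_prob \<mu> \<sigma>b c * E (post_world \<mu> \<sigma>b c) = (\<Sum>s\<in>S. sig_prob \<mu> \<sigma> s * E (post_world \<mu> \<sigma> s))"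
        unfolding E_def by (rule comb)
      show "y \<in> blocking_pub Ts u \<mu> d \<sigma>b c \<longleftrightarrow> y \<in> snd c"
      proof
        assume yb: "y \<in> blocking_pub Ts u \<mu> d \<sigma>b c"
        hence cnd: cond and Eb: "E (post_world \<mu> \<sigma>b c) \<ge> 0" using memb by auto
        show "y \<in> snd c"
        proof (rule ccontr)
          assume nin: "y \<notin> snd c"
          have neg: "E (post_world \<mu> \<sigma> s) < 0" if "s \<in> S" for s using mems[OF that] nin cnd by auto
          have "(\<Sum>s\<in>S. sig_prob \<mu> \<sigma> s * E (post_world \<mu> \<sigma> s))
              = sig_prob \<mu> \<sigma> s1 * E (post_world \<mu> \<sigma> s1) + (\<Sum>s\<in>S - {s1}. sig_prob \<mu> \<sigma> s * E (post_world \<mu> \<sigma> s))"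
            by (rule sum.remove[OF finS s1(1)])
          also have "(\<Sum>s\<in>S - {s1}. sig_prob \<mu> \<sigma> s * E (post_world \<mu> \<sigma> s)) \<le> 0"
          proof (rule sum_nonpos)
            fix s assume "s \<in> S - {s1}"
            hence "s \<in> S" by blast
            show "sig_prob \<mu> \<sigma> s * E (post_world \<mu> \<sigma> s) \<le> 0"
              by (rule mult_nonneg_nonpos[OF sig_prob_nonneg less_imp_le[OF neg[OF \<open>s \<in> S\<close>]]])
          qed
          moreover have "sig_prob \<mu> \<sigma> s1 * E (post_world \<mu> \<sigma> s1) < 0"
            using s1 neg[OF s1(1)] by (simp add: mult_pos_neg)
          ultimately have "sig_prob \<mu> \<sigma>b c * E (post_world \<mu> \<sigma>b c) < 0" using cm by linarith
          moreover have "sig_prob \<mu> \<sigma>b c * E (post_world \<mu> \<sigma>b c) \<ge> 0" using Pb Eb by simp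
          ultimately show False by linarith
        qed
      next
        assume yc: "y \<in> snd c"
        hence cnd: cond using mems[OF s0S'] by auto
        have pos: "E (post_world \<mu> \<sigma> s) \<ge> 0" if "s \<in> S" for s using mems[OF that] yc by auto
        have "(\<Sum>s\<in>S. sig_prob \<mu> \<sigma> s * E (post_world \<mu> \<sigma> s)) \<ge> 0"
        proof (rule sum_nonneg)
          fix s assume "s \<in> S"
          show "0 \<le> sig_prob \<mu> \<sigma> s * E (post_world \<mu> \<sigma> s)"
            by (rule mult_nonneg_nonneg[OF sig_prob_nonneg pos[OF \<open>s \<in> S\<close>]])
        qed
        hence "sig_prob \<mu> \<sigma>b c * E (post_world \<mu> \<sigma>b c) \<ge> 0" using cm by simp
        hence "E (post_world \<mu> \<sigma>b c) \<ge> 0" using Pb by (simp add: zero_le_mult_iff)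
        thus "y \<in> blocking_pub Ts u \<mu> d \<sigma>b c" using memb cnd by auto
      qed
    qed
    show ?thesis using blk repc cC jc by blast
  qed
  have stb: "stable_pub_policy n Ts u \<mu> d \<sigma>b"
    unfolding stable_pub_policy_def
  proof (intro conjI polb allI impI)
    fix c assume Pb: "sig_prob \<mu> \<sigma>b c > 0"
    note k = key[OF Pb]
    have "snd c \<in> B_pub Ts d (profile Ts (fst c))" using k unfolding C_set_def by auto
    hence "\<forall>\<delta>\<in>D_rho Ts d (profile Ts (fst c)). \<exists>y\<in>blocking_pub Ts u \<mu> d \<sigma>b c. fst y = \<delta>"
      using k unfolding B_pub_def by auto
    thus "\<not> unstable_pub n Ts u \<mu> d \<sigma>b c" by (rule stable_from_blocking[OF part conjunct2[OF conjunct2[OF conjunct2[OF k]]]])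
  qed
  have pu: "principal_util Ts u0 \<mu> \<sigma>b = principal_util Ts u0 \<mu> \<sigma>"
    unfolding principal_util_def
  proof (rule sum.cong[OF refl])
    fix \<omega>
    have fin: "finite (set_pmf (\<sigma> \<omega>))" using pol unfolding is_policy_def by simp
    have finb: "finite (set_pmf (\<sigma>b \<omega>))" using polb unfolding is_policy_def by simp
    have "(\<Sum>s\<in>set_pmf (\<sigma>b \<omega>). pmf (\<sigma>b \<omega>) s * u0 (profile Ts (fst s)) \<omega>)
        = measure_pmf.expectation (\<sigma>b \<omega>) (\<lambda>s. u0 (profile Ts (fst s)) \<omega>)" by (rule sum_fin_expect[OF finb])
    also have "\<dots> = measure_pmf.expectation (\<sigma> \<omega>) (\<lambda>s. u0 (profile Ts (fst (sig s))) \<omega>)"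
      unfolding \<sigma>b_def by (rule integral_map_pmf)
    also have "\<dots> = (\<Sum>s\<in>set_pmf (\<sigma> \<omega>). pmf (\<sigma> \<omega>) s * u0 (profile Ts (fst (sig s))) \<omega>)"
      by (rule sum_fin_expect[OF fin, symmetric])
    also have "\<dots> = (\<Sum>s\<in>set_pmf (\<sigma> \<omega>). pmf (\<sigma> \<omega>) s * u0 (profile Ts (fst s)) \<omega>)"
    proof (rule sum.cong[OF refl])
      fix s assume "s \<in> set_pmf (\<sigma> \<omega>)"
      hence "s \<in> S0" unfolding S0_def by blast
      hence "profile Ts (fst (sig s)) = profile Ts (fst s)" using sigC by blast
      thus "pmf (\<sigma> \<omega>) s * u0 (profile Ts (fst (sig s))) \<omega> = pmf (\<sigma> \<omega>) s * u0 (profile Ts (fst s)) \<omega>"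
        by simp
    qed
    finally show "pmf \<mu> \<omega> * (\<Sum>s\<in>set_pmf (\<sigma>b \<omega>). pmf (\<sigma>b \<omega>) s * u0 (profile Ts (fst s)) \<omega>)
        = pmf \<mu> \<omega> * (\<Sum>s\<in>set_pmf (\<sigma> \<omega>). pmf (\<sigma> \<omega>) s * u0 (profile Ts (fst s)) \<omega>)" by simp
  qed
  have sg: "\<forall>c\<in>C_set Ts d Abar. sig_prob \<mu> \<sigma>b c > 0 \<longrightarrow> signature_pub Ts u \<mu> d Abar \<sigma>b c = c"
  proof (intro ballI impI)
    fix c assume "c \<in> C_set Ts d Abar" "sig_prob \<mu> \<sigma>b c > 0"
    note k = key[OF this(2)]
    show "signature_pub Ts u \<mu> d Abar \<sigma>b c = c" unfolding signature_pub_def using k by (cases c) auto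
  qed
  show ?thesis
    by (rule exI[of _ \<sigma>b]) (use stb C1 pu sg in auto)
qed


end
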